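(* For every $0<p<1$ we have $\frac12<\pi(p,p)<1$.
   Context: Let $\beta_1,\beta_2,\ldots$ be independent Bernoulli random variables with success probability $p$. A stake sequence is a sequence $\gamma=(c_1,c_2,\ldots)$ of non-negative reals with $c_1\ge c_2\ge\cdots$ and $\sum_i c_i=1$; write $S_\gamma=\sum_i c_i\beta_i$. For $0\le p\le t\le 1$ define $\pi(p,t)=\sup\{\mathbf P(S_\gamma\ge t)\mid \gamma \text{ a stake sequence}\}$. *)

theory Defs
  imports "HOL-Probability.Probability"
begin

text \<open>Probability space of an infinite i.i.d. sequence of Bernoulli(p) variables
  beta_0, beta_1, ... (indexed from 0), modelled as the infinite product measure on
  nat => bool.\<close>
definition bern_seq :: "real \<Rightarrow> (nat \<Rightarrow> bool) measure" where
  "bern_seq p = PiM UNIV (\<lambda>_. measure_pmf (bernoulli_pmf p))"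

definition stake_seq :: "(nat \<Rightarrow> real) \<Rightarrow> bool" where
  "stake_seq c \<longleftrightarrow> (\<forall>i. 0 \<le> c i) \<and> (\<forall>i. c (Suc i) \<le> c i) \<and> c sums 1"

definition S_gamma :: "(nat \<Rightarrow> real) \<Rightarrow> (nat \<Rightarrow> bool) \<Rightarrow> real" where
  "S_gamma c \<omega> = (\<Sum>i. c i * (if \<omega> i then 1 else 0))"

definition pi_fun :: "real \<Rightarrow> real \<Rightarrow> real" where
  "pi_fun p t = Sup {measure (bern_seq p) {\<omega> \<in> space (bern_seq p). S_gamma c \<omega> \<ge> t} | c. stake_seq c}"

end

theory Submission
  imports Defs
begin




lemma neg_part:
  fixes v t :: real
  assumes "0 < v" "v \<le> 1/4" "0 \<le> t"
  shows "v * t^2 \<le> t + (v^2/4) * t^4"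
proof -
  define y where "y = v * t"
  have y0: "0 \<le> y" using assms by (simp add: y_def)
  have y1: "y \<le> 1 + y^3"
  proof (cases "y \<le> 1")
    case True then show ?thesis using y0 by (simp add: add_increasing2)
  next
    case False
    then have "y * 1 \<le> y * y^2" using y0 by (intro mult_left_mono) (auto simp: power2_eq_square intro: order_trans[OF _ mult_right_mono[of 1 y y]])
    then show ?thesis by (simp add: power2_eq_square power3_eq_cube)
  qed
  have "y^3 \<le> y^3 / (4 * v)"
  proof -
    have "1 \<le> 1/(4 * v)" using assms by (simp add: field_simps)
    then show ?thesis using y0 by (metis mult_left_mono mult_1_right times_divide_eq_right zero_le_power)
  qed
  with y1 have "y \<le> 1 + y^3/(4 * v)" by simp
  then have "t * y \<le> t * (1 + y^3/(4 * v))" using assms by (intro mult_left_mono) auto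
  then show ?thesis using assms unfolding y_def
    by (simp add: field_simps power2_eq_square power3_eq_cube power4_eq_xxxx)
qed

lemma ptwise:
  fixes v w :: real
  assumes v0: "0 < v" and v1: "v \<le> 1/4"
  shows "(w + v * w^2 - (v^2/4) * w^4 - v/2) / (1 + (1+v)^2/v^2) \<le> (if w > v/4 then 1 else 0)"
proof -
  define C where "C = 1 + (1+v)^2/v^2"
  have C0: "0 < C" unfolding C_def using v0 by (simp add: add_pos_nonneg)
  show ?thesis
  proof (cases "w > v/4")
    case True
    have am: "(1+v) * w^2 \<le> (v^2/4) * w^4 + (1+v)^2/v^2"
    proof -
      have "0 \<le> ((v/2) * w^2 - (1+v)/v)^2" by simp
      then show ?thesis using v0 by (simp add: power2_eq_square power4_eq_xxxx field_simps)
    qed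
    have "w \<le> 1 + w^2"
    proof -
      have "0 \<le> (w - 1/2)^2" by simp
      then show ?thesis by (simp add: power2_eq_square algebra_simps)
    qed
    then have "w + v * w^2 - (v^2/4) * w^4 - v/2 \<le> C"
      using am v0 unfolding C_def by (simp add: algebra_simps)
    then show ?thesis using True C0 by (simp add: C_def[symmetric])
  next
    case False
    have "w + v * w^2 - (v^2/4) * w^4 \<le> v/2"
    proof (cases "0 \<le> w")
      case True
      have "w^2 \<le> (v/4)^2" using True False by (intro power_mono) auto
      then have "v * w^2 \<le> v * (v/4)^2" using v0 by (intro mult_left_mono) auto
      also have "\<dots> \<le> v/4"
      proof -
        have vv: "v * v \<le> 1 * 4" using v0 v1 by (intro mult_mono) auto
        have "v * (v/4)^2 = v * (v * v/16)" by (simp add: power2_eq_square)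
        also have "\<dots> \<le> v * (4/16)" using vv v0 by (intro mult_left_mono) auto
        finally show ?thesis by simp
      qed
      finally have vw: "v * w^2 \<le> v/4" .
      have "0 \<le> (v^2/4) * w^4" by simp
      then show ?thesis using vw False by linarith
    next
      case neg: False
      have "v * (-w)^2 \<le> (-w) + (v^2/4) * (-w)^4" using neg_part[OF v0 v1, of "-w"] neg by simp
      then show ?thesis using v0 by simp
    qed
    then show ?thesis using False C0 by (simp add: C_def[symmetric] divide_le_0_iff)
  qed
qed

locale bs =
  fixes p :: real
  assumes p0: "0 < p" and p1: "p < 1"
begin

abbreviation "B \<equiv> measure_pmf (bernoulli_pmf p)"
abbreviation "M \<equiv> bern_seq p"

lemma M_def: "M = PiM UNIV (\<lambda>_. B)" by (simp add: bern_seq_def)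

lemma prob_M: "prob_space M"
  unfolding M_def by (rule prob_space_PiM) (simp add: measure_pmf.prob_space_axioms)

lemma distr_comp: "distr M B (\<lambda>\<omega>. \<omega> i) = B"
  unfolding M_def by (rule distr_PiM_component) (auto simp: measure_pmf.prob_space_axioms)

lemma indep_coord: "prob_space.indep_vars M (\<lambda>_. B) (\<lambda>i \<omega>. \<omega> i) UNIV"
proof -
  interpret prob_space M by (rule prob_M)
  have "distr M (\<Pi>\<^sub>M i\<in>UNIV. B) (\<lambda>x. \<lambda>i\<in>UNIV. x i) = (\<Pi>\<^sub>M i\<in>UNIV. distr M B (\<lambda>\<omega>. \<omega> i))"
  proof -
    have r: "(\<lambda>x::nat\<Rightarrow>bool. \<lambda>i\<in>UNIV. x i) = (\<lambda>x. x)" by (auto simp: restrict_def)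
    have "distr M (\<Pi>\<^sub>M i\<in>UNIV. B) (\<lambda>x. \<lambda>i\<in>UNIV. x i) = distr M M (\<lambda>x. x)"
      by (simp add: M_def r)
    also have "\<dots> = M" by (rule distr_id)
    finally show ?thesis using distr_comp[unfolded M_def] by (simp add: M_def)
  qed
  then show ?thesis
    by (subst indep_vars_iff_distr_eq_PiM) (auto simp: M_def)
qed


sublocale P: prob_space M by (rule prob_M)

definition X :: "nat \<Rightarrow> (nat \<Rightarrow> bool) \<Rightarrow> real" where
  "X i \<omega> = p - (if \<omega> i then 1 else 0)"

lemma X_meas[measurable]: "X i \<in> borel_measurable M"
  unfolding X_def M_def by measurable

lemma X_bound: "\<bar>X i \<omega>\<bar> \<le> 1"
  using p0 p1 by (auto simp: X_def)

lemma indep_X: "P.indep_vars (\<lambda>_. borel) X UNIV"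
proof -
  have "P.indep_vars (\<lambda>_. borel) (\<lambda>i \<omega>. (\<lambda>b. p - (if b then 1 else 0)) (\<omega> i)) UNIV"
    by (rule P.indep_vars_compose2[OF indep_coord]) auto
  then show ?thesis by (simp add: X_def[abs_def])
qed

lemma int_fun_coord: "integral\<^sup>L M (\<lambda>\<omega>. g (\<omega> i)) = g True * p + g False * (1 - p)"
proof -
  have "integral\<^sup>L M (\<lambda>\<omega>. g (\<omega> i)) = integral\<^sup>L (distr M B (\<lambda>\<omega>. \<omega> i)) g"
    by (subst integral_distr) (auto simp: M_def)
  also have "\<dots> = integral\<^sup>L B g" by (simp add: distr_comp)
  finally show ?thesis using p0 p1 by simp
qed

lemma X_pow: "integral\<^sup>L M (\<lambda>\<omega>. X i \<omega> ^ k) = (p - 1) ^ k * p + p ^ k * (1 - p)"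
  using int_fun_coord[of "\<lambda>b. (p - (if b then 1 else 0)) ^ k" i] by (simp add: X_def)

definition Z :: "(nat \<Rightarrow> real) \<Rightarrow> nat \<Rightarrow> (nat \<Rightarrow> bool) \<Rightarrow> real" where
  "Z c n \<omega> = (\<Sum>i<n. c i * X i \<omega>)"

lemma Z_meas[measurable]: "Z c n \<in> borel_measurable M"
  unfolding Z_def by measurable

lemma Z_Suc: "Z c (Suc n) \<omega> = Z c n \<omega> + c n * X n \<omega>"
  by (simp add: Z_def)

lemma indep_ZX: "P.indep_var borel (\<lambda>\<omega>. Z c n \<omega> ^ a) borel (\<lambda>\<omega>. X n \<omega> ^ b)"
proof -
  have 1: "P.indep_var (PiM {..<n} (\<lambda>_. borel)) (\<lambda>\<omega>. restrict (\<lambda>i. X i \<omega>) {..<n})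
                       (PiM {n} (\<lambda>_. borel)) (\<lambda>\<omega>. restrict (\<lambda>i. X i \<omega>) {n})"
    by (rule P.indep_var_restrict[OF indep_X]) auto
  have 2: "P.indep_var borel ((\<lambda>f. (\<Sum>i<n. c i * f i) ^ a) \<circ> (\<lambda>\<omega>. restrict (\<lambda>i. X i \<omega>) {..<n}))
                       borel ((\<lambda>f. (f n) ^ b) \<circ> (\<lambda>\<omega>. restrict (\<lambda>i. X i \<omega>) {n}))"
    by (rule P.indep_var_compose[OF 1]) auto
  show ?thesis using 2 by (simp add: o_def Z_def)
qed


lemma Z_bound: "\<bar>Z c n \<omega>\<bar> \<le> (\<Sum>i<n. \<bar>c i\<bar>)"
proof -
  have "\<bar>Z c n \<omega>\<bar> \<le> (\<Sum>i<n. \<bar>c i * X i \<omega>\<bar>)" unfolding Z_def by (rule sum_abs)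
  also have "\<dots> \<le> (\<Sum>i<n. \<bar>c i\<bar>)"
    by (intro sum_mono) (auto simp: abs_mult intro: mult_left_le[OF X_bound])
  finally show ?thesis .
qed

lemma int_ZX: "integrable M (\<lambda>\<omega>. Z c n \<omega> ^ a * X m \<omega> ^ b)"
proof (rule P.integrable_const_bound[where B="(\<Sum>i<n. \<bar>c i\<bar>) ^ a"])
  show "AE x in M. norm (Z c n x ^ a * X m x ^ b) \<le> (\<Sum>i<n. \<bar>c i\<bar>) ^ a"
  proof (intro AE_I2)
    fix x
    have "\<bar>X m x ^ b\<bar> \<le> 1" using X_bound by (simp add: power_abs power_le_one)
    moreover have "\<bar>Z c n x ^ a\<bar> \<le> (\<Sum>i<n. \<bar>c i\<bar>) ^ a"
      unfolding power_abs by (rule power_mono[OF Z_bound]) simp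
    ultimately show "norm (Z c n x ^ a * X m x ^ b) \<le> (\<Sum>i<n. \<bar>c i\<bar>) ^ a"
      by (simp add: abs_mult) (metis abs_ge_zero mult_le_one mult.commute mult_right_le_one_le  mult_mono order_trans mult_1_right)
  qed
qed simp

lemma int_Z: "integrable M (\<lambda>\<omega>. Z c n \<omega> ^ a)"
  using int_ZX[of c n a 0 0] by simp

lemma int_X: "integrable M (\<lambda>\<omega>. X m \<omega> ^ b)"
  using int_ZX[of c 0 0 m b] by (simp add: Z_def)

lemmas ints = int_Z int_X int_ZX int_Z[of _ _ 1, simplified] int_X[of _ 1, simplified]
  int_ZX[of _ _ 1 _ _, simplified] int_ZX[of _ _ _ _ 1, simplified] int_ZX[of _ _ 1 _ 1, simplified]

lemma E_ZX: "integral\<^sup>L M (\<lambda>\<omega>. Z c n \<omega> ^ a * X n \<omega> ^ b) = integral\<^sup>L M (\<lambda>\<omega>. Z c n \<omega> ^ a) * integral\<^sup>L M (\<lambda>\<omega>. X n \<omega> ^ b)"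
  by (rule P.indep_var_lebesgue_integral[OF indep_ZX int_Z int_X])


definition v :: real where "v = p * (1 - p)"

lemma v_pos: "0 < v" using p0 p1 by (simp add: v_def)
lemma v_le: "v \<le> 1/4"
proof -
  have "0 \<le> (p - 1/2)^2" by simp
  then show ?thesis by (simp add: v_def power2_eq_square algebra_simps)
qed

lemma EX1: "integral\<^sup>L M (\<lambda>\<omega>. X n \<omega>) = 0"
  using X_pow[of n 1] by (simp add: algebra_simps)
lemma EX2: "integral\<^sup>L M (\<lambda>\<omega>. X n \<omega> ^ 2) = v"
  using X_pow[of n 2] by (simp add: v_def power2_eq_square algebra_simps)
lemma EX4: "integral\<^sup>L M (\<lambda>\<omega>. X n \<omega> ^ 4) \<le> v"
proof -
  have "(p - 1) ^ 4 * p + p ^ 4 * (1 - p) = v * ((1-p)^3 + p^3)"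
    by (simp add: v_def power2_eq_square power3_eq_cube power4_eq_xxxx algebra_simps)
  also have "\<dots> \<le> v * 1"
  proof (rule mult_left_mono)
    have a: "(1-p)^3 \<le> (1-p)^1" using p0 p1 by (intro power_decreasing) auto
    have b: "p^3 \<le> p^1" using p0 p1 by (intro power_decreasing) auto
    show "(1-p)^3 + p^3 \<le> 1" using a b by simp
  qed (use v_pos in auto)
  finally show ?thesis using X_pow[of n 4] by simp
qed

definition Q :: "(nat \<Rightarrow> real) \<Rightarrow> nat \<Rightarrow> real" where "Q c n = (\<Sum>i<n. (c i)^2)"

lemma Q_nonneg: "0 \<le> Q c n" by (simp add: Q_def sum_nonneg)

lemma EZ1: "integral\<^sup>L M (\<lambda>\<omega>. Z c n \<omega>) = 0"
proof (induction n)
  case 0 then show ?case by (simp add: Z_def)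
next
  case (Suc n)
  have "integral\<^sup>L M (\<lambda>\<omega>. Z c (Suc n) \<omega>) = integral\<^sup>L M (\<lambda>\<omega>. Z c n \<omega>) + integral\<^sup>L M (\<lambda>\<omega>. c n * X n \<omega>)"
    unfolding Z_Suc using ints by simp
  then show ?case using Suc EX1 by simp
qed

lemma EZ2: "integral\<^sup>L M (\<lambda>\<omega>. Z c n \<omega> ^ 2) = v * Q c n"
proof (induction n)
  case 0 then show ?case by (simp add: Z_def Q_def)
next
  case (Suc n)
  have e: "(\<lambda>\<omega>. Z c (Suc n) \<omega> ^ 2) = (\<lambda>\<omega>. Z c n \<omega> ^ 2 + ((2 * c n) * (Z c n \<omega> ^ 1 * X n \<omega> ^ 1) + (c n)^2 * X n \<omega> ^ 2))"
    by (auto simp: Z_Suc power2_eq_square algebra_simps)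
  have "integral\<^sup>L M (\<lambda>\<omega>. Z c (Suc n) \<omega> ^ 2) = integral\<^sup>L M (\<lambda>\<omega>. Z c n \<omega> ^ 2) + ((2 * c n) * integral\<^sup>L M (\<lambda>\<omega>. Z c n \<omega> ^ 1 * X n \<omega> ^ 1) + (c n)^2 * integral\<^sup>L M (\<lambda>\<omega>. X n \<omega> ^ 2))"
    unfolding e using ints by simp
  also have "\<dots> = v * Q c (Suc n)"
    unfolding E_ZX using Suc EX1 EX2 EZ1 by (simp add: Q_def algebra_simps)
  finally show ?case .
qed

lemma EZ4: "integral\<^sup>L M (\<lambda>\<omega>. Z c n \<omega> ^ 4) \<le> v * (Q c n)^2"
proof (induction n)
  case 0 then show ?case by (simp add: Z_def Q_def)
next
  case (Suc n)
  have e: "(\<lambda>\<omega>. Z c (Suc n) \<omega> ^ 4) = (\<lambda>\<omega>. Z c n \<omega> ^ 4 + ((4 * c n) * (Z c n \<omega> ^ 3 * X n \<omega> ^ 1) + ((6 * (c n)^2) * (Z c n \<omega> ^ 2 * X n \<omega> ^ 2) + ((4 * (c n)^3) * (Z c n \<omega> ^ 1 * X n \<omega> ^ 3) + (c n)^4 * X n \<omega> ^ 4))))"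
    by (auto simp: Z_Suc power2_eq_square power3_eq_cube power4_eq_xxxx algebra_simps)
  have "integral\<^sup>L M (\<lambda>\<omega>. Z c (Suc n) \<omega> ^ 4) = integral\<^sup>L M (\<lambda>\<omega>. Z c n \<omega> ^ 4) + ((4 * c n) * integral\<^sup>L M (\<lambda>\<omega>. Z c n \<omega> ^ 3 * X n \<omega> ^ 1) + ((6 * (c n)^2) * integral\<^sup>L M (\<lambda>\<omega>. Z c n \<omega> ^ 2 * X n \<omega> ^ 2) + ((4 * (c n)^3) * integral\<^sup>L M (\<lambda>\<omega>. Z c n \<omega> ^ 1 * X n \<omega> ^ 3) + (c n)^4 * integral\<^sup>L M (\<lambda>\<omega>. X n \<omega> ^ 4))))"
    unfolding e using ints by simp
  also have "\<dots> = integral\<^sup>L M (\<lambda>\<omega>. Z c n \<omega> ^ 4) + 6 * (c n)^2 * v * Q c n * v + (c n)^4 * integral\<^sup>L M (\<lambda>\<omega>. X n \<omega> ^ 4)"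
    unfolding E_ZX using EX1 EX2 EZ1 EZ2 by (simp add: algebra_simps)
  also have "\<dots> \<le> v * (Q c n)^2 + 6 * (c n)^2 * v * Q c n * v + (c n)^4 * v"
    using Suc EX4[of n] v_pos Q_nonneg[of c n] by (intro add_mono mult_left_mono) auto
  also have "\<dots> \<le> v * (Q c (Suc n))^2"
  proof -
    have "6 * (c n)^2 * v * Q c n * v \<le> 2 * (c n)^2 * v * Q c n"
    proof -
      have "0 \<le> (c n)^2 * v * Q c n" using v_pos Q_nonneg by simp
      moreover have "6 * v \<le> 2" using v_le by simp
      ultimately have "((c n)^2 * v * Q c n) * (6 * v) \<le> ((c n)^2 * v * Q c n) * 2"
        by (simp add: mult_left_mono)
      then show ?thesis by (simp add: algebra_simps)
    qed
    then show ?thesis by (simp add: Q_def power2_eq_square power4_eq_xxxx algebra_simps)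
  qed
  finally show ?case .
qed


lemma anti:
  assumes Qpos: "0 < Q c n"
  shows "(v/4) / (1 + (1+v)^2/v^2) \<le> measure M {\<omega>\<in>space M. Z c n \<omega> > (v/4) * sqrt (v * Q c n)}"
proof -
  define s where "s = sqrt (v * Q c n)"
  define C where "C = 1 + (1+v)^2/v^2"
  define A where "A = {\<omega>\<in>space M. Z c n \<omega> > (v/4) * s}"
  have vQ: "0 < v * Q c n" using v_pos Qpos by simp
  have s0: "0 < s" unfolding s_def using vQ by simp
  have s2: "s^2 = v * Q c n" unfolding s_def using vQ by simp
  have s4: "s^4 = (v * Q c n)^2" using s2 by (metis power_mult numeral_Bit0 power2_eq_square mult_2)
  have C0: "0 < C" unfolding C_def using v_pos by (simp add: add_pos_nonneg)
  have Ameas: "A \<in> sets M" unfolding A_def by measurable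
  define a1 where "a1 = 1 / (s * C)"
  define a2 where "a2 = v / (s^2 * C)"
  define a4 where "a4 = - (v^2/4) / (s^4 * C)"
  define a0 where "a0 = - (v/2) / C"
  define g where "g \<omega> = a1 * Z c n \<omega> + a2 * Z c n \<omega> ^ 2 + a4 * Z c n \<omega> ^ 4 + a0" for \<omega>
  have g_eq: "g \<omega> = (Z c n \<omega> / s + v * (Z c n \<omega> / s)^2 - (v^2/4) * (Z c n \<omega> / s)^4 - v/2) / C" for \<omega>
    unfolding g_def a1_def a2_def a4_def a0_def using s0 C0
    by (simp add: field_simps power2_eq_square power4_eq_xxxx)
  have g_le: "g \<omega> \<le> indicator A \<omega>" if "\<omega> \<in> space M" for \<omega>
  proof -
    have "g \<omega> \<le> (if Z c n \<omega> / s > v/4 then 1 else 0)"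
      unfolding g_eq C_def by (rule ptwise[OF v_pos v_le])
    also have "\<dots> = indicator A \<omega>"
      using that s0 by (simp add: A_def indicator_def pos_less_divide_eq mult.commute)
    finally show ?thesis .
  qed
  have int_g: "integrable M g" unfolding g_def using ints by simp
  have Eg: "integral\<^sup>L M g = a1 * 0 + a2 * (v * Q c n) + a4 * integral\<^sup>L M (\<lambda>\<omega>. Z c n \<omega> ^ 4) + a0"
    unfolding g_def using ints EZ1[of c n] EZ2[of c n] by (simp add: P.prob_space)
  have a4neg: "a4 \<le> 0" unfolding a4_def using s0 C0 by (simp add: divide_nonpos_pos)
  have "a4 * integral\<^sup>L M (\<lambda>\<omega>. Z c n \<omega> ^ 4) \<ge> a4 * (v * (Q c n)^2)"
    using EZ4[of c n] a4neg by (rule mult_left_mono_neg)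
  then have "integral\<^sup>L M g \<ge> a2 * (v * Q c n) + a4 * (v * (Q c n)^2) + a0" using Eg by simp
  also have "a2 * (v * Q c n) + a4 * (v * (Q c n)^2) + a0 = (v/4) / C"
    unfolding a2_def a4_def a0_def s2 s4 using vQ C0 v_pos Qpos
    by (simp add: field_simps power2_eq_square)
  finally have "(v/4) / C \<le> integral\<^sup>L M g" .
  also have "\<dots> \<le> integral\<^sup>L M (indicator A)"
    using int_g Ameas g_le by (intro integral_mono_AE) (auto intro!: integrable_real_indicator simp: P.emeasure_finite less_top[symmetric])
  also have "\<dots> = measure M A" using Ameas by (simp add: Int_absorb2 sets.sets_into_space)
  finally show ?thesis unfolding A_def s_def C_def .
qed



definition delta :: real where "delta = (v/4) / (1 + (1+v)^2/v^2)"

lemma delta_pos: "0 < delta"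
  unfolding delta_def using v_pos by (intro divide_pos_pos) (auto simp: add_pos_nonneg)

lemma upper:
  assumes st: "stake_seq c"
  shows "measure M {\<omega>\<in>space M. S_gamma c \<omega> \<ge> p} \<le> 1 - delta"
proof -
  have c0: "\<And>i. 0 \<le> c i" and dec: "\<And>i. c (Suc i) \<le> c i" and cs: "c sums 1"
    using st by (auto simp: stake_seq_def)
  have summ: "summable c" using cs by (rule sums_summable)
  have decs: "decseq c" using dec by (simp add: decseq_Suc_iff)
  have cpos: "0 < c 0"
  proof (rule ccontr)
    assume "\<not> 0 < c 0"
    have "\<And>i. c i = 0"
    proof -
      fix i
      have "c i \<le> c 0" using decs by (simp add: decseq_def)
      then show "c i = 0" using c0[of i] \<open>\<not> 0 < c 0\<close> by linarith
    qed
    then have "c = (\<lambda>_. 0)" by auto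
    then have "c sums 0" by simp
    from cs this have "(1::real) = 0" by (rule sums_unique2)
    then show False by simp
  qed
  define eps where "eps = (v/4) * (sqrt v * c 0)"
  have eps0: "0 < eps" unfolding eps_def using v_pos cpos by simp
  from suminf_exist_split[OF eps0 summ] obtain N where N: "\<forall>n\<ge>N. norm (\<Sum>i. c (i + n)) < eps" ..
  define n where "n = Suc N"
  define r where "r = (\<Sum>i. c (i + n))"
  have rlt: "r < eps" using N[rule_format, of n] unfolding r_def n_def by (simp add: abs_less_iff) 
  have r0: "0 \<le> r" unfolding r_def using summ c0 by (intro suminf_nonneg) (auto simp: summable_iff_shift)
  have csplit: "1 = r + (\<Sum>i<n. c i)"
    using suminf_split_initial_segment[OF summ, of n] sums_unique[OF cs] unfolding r_def by simp
  have Qge: "(c 0)^2 \<le> Q c n" unfolding Q_def n_def by (rule member_le_sum[of 0, where f="\<lambda>i. (c i)^2"]) auto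
  have Qpos: "0 < Q c n" using Qge cpos by (meson less_le_trans zero_less_power)
  have sq: "sqrt v * c 0 \<le> sqrt (v * Q c n)"
  proof -
    have "sqrt v * c 0 = sqrt (v * (c 0)^2)" using cpos by (simp add: real_sqrt_mult)
    also have "\<dots> \<le> sqrt (v * Q c n)"
    proof (rule real_sqrt_le_mono)
      show "v * (c 0)^2 \<le> v * Q c n" using v_pos by (intro mult_left_mono[OF Qge]) simp
    qed
    finally show ?thesis .
  qed
  define A where "A = {\<omega>\<in>space M. Z c n \<omega> > (v/4) * sqrt (v * Q c n)}"
  have Ameas: "A \<in> sets M" unfolding A_def by measurable
  have sub: "{\<omega>\<in>space M. S_gamma c \<omega> \<ge> p} \<subseteq> space M - A"
  proof safe
    fix \<omega> assume om: "\<omega> \<in> space M" and Sge: "p \<le> S_gamma c \<omega>" and inA: "\<omega> \<in> A"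
    define f where "f i = c i * (if \<omega> i then 1 else 0)" for i
    have f0: "\<And>i. 0 \<le> f i" and fc: "\<And>i. f i \<le> c i" using c0 by (auto simp: f_def)
    have "\<forall>i\<ge>0. norm (f i) \<le> c i" using f0 fc by simp
    then have sf: "summable f" by (rule summable_comparison_test[OF exI summ])
    have "S_gamma c \<omega> = (\<Sum>i. f (i + n)) + (\<Sum>i<n. f i)"
      unfolding S_gamma_def f_def[symmetric] by (rule suminf_split_initial_segment[OF sf])
    also have "(\<Sum>i. f (i + n)) \<le> r"
      unfolding r_def using sf summ fc by (intro suminf_le) (auto simp: summable_iff_shift)
    also have "(\<Sum>i<n. f i) = p * (\<Sum>i<n. c i) - Z c n \<omega>"
      unfolding Z_def f_def X_def sum_distrib_left sum_subtractf[symmetric] by (intro sum.cong) (auto simp: algebra_simps)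
    finally have "S_gamma c \<omega> \<le> r + (p * (\<Sum>i<n. c i) - Z c n \<omega>)" by simp
    moreover have "(\<Sum>i<n. c i) = 1 - r" using csplit by simp
    ultimately have "p \<le> r + (p * (1 - r) - Z c n \<omega>)" using Sge by simp
    then have "Z c n \<omega> \<le> (1 - p) * r" by (simp add: algebra_simps)
    also have "\<dots> \<le> r" using r0 p0 by (simp add: algebra_simps)
    also have "\<dots> < eps" by (rule rlt)
    also have "eps \<le> (v/4) * sqrt (v * Q c n)" unfolding eps_def using sq v_pos by simp
    finally show False using inA by (simp add: A_def)
  qed
  have "measure M {\<omega>\<in>space M. S_gamma c \<omega> \<ge> p} \<le> measure M (space M - A)"
    using sub Ameas by (intro P.finite_measure_mono) auto
  also have "\<dots> = 1 - measure M A" using Ameas by (rule P.prob_compl)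
  also have "\<dots> \<le> 1 - delta" using anti[OF Qpos] unfolding A_def delta_def by simp
  finally show ?thesis .
qed



lemma pow_half:
  fixes n :: nat
  assumes n1: "1 \<le> n" and hi: "1/p < real n + 1"
  shows "(1-p)^n < 1/2"
proof -
  have np: "0 < real n" using n1 by simp
  have "1 < p * (real n + 1)" using hi p0 by (simp add: field_simps)
  then have "1 - p < real n / (real n + 1)" using np by (simp add: field_simps)
  then have "(1-p)^n < (real n / (real n + 1))^n"
    using p1 n1 by (intro power_strict_mono) auto
  also have "\<dots> \<le> 1/2"
  proof -
    have "1 + real n * (1 / real n) \<le> (1 + 1 / real n)^n"
    proof (rule Bernoulli_inequality)
      have "0 \<le> 1 / real n" by simp
      then show "-1 \<le> 1 / real n" by linarith
    qed
    then have b: "2 \<le> (1 + 1 / real n)^n" using np by simp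
    have "(real n / (real n + 1))^n = 1 / (1 + 1 / real n)^n"
      using np by (simp add: field_simps power_divide)
    also have "\<dots> \<le> 1/2" using b by (simp add: field_simps)
    finally show ?thesis .
  qed
  finally show ?thesis .
qed

lemma all_false:
  "measure M {\<omega>\<in>space M. \<forall>i<n. \<not> \<omega> i} = (1-p)^n"
proof -
  have eq: "{\<omega>\<in>space M. \<forall>i<n. \<not> \<omega> i} = prod_emb UNIV (\<lambda>_. B) {..<n} (PiE {..<n} (\<lambda>_. {False}))"
    by (auto simp: M_def prod_emb_def space_PiM PiE_iff restrict_def fun_eq_iff)
  have "emeasure M (prod_emb UNIV (\<lambda>_. B) {..<n} (PiE {..<n} (\<lambda>_. {False}))) = (\<Prod>i\<in>{..<n}. emeasure B {False})"
    unfolding M_def by (rule emeasure_PiM_emb) (auto simp: measure_pmf.prob_space_axioms)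
  then have "emeasure M {\<omega>\<in>space M. \<forall>i<n. \<not> \<omega> i} = (\<Prod>i\<in>{..<n}. emeasure B {False})"
    by (simp only: eq)
  also have "\<dots> = ennreal ((1-p)^n)"
    using p0 p1 by (simp add: emeasure_pmf_single prod_ennreal[symmetric] ennreal_power)
  finally show ?thesis using p0 p1 by (simp add: P.emeasure_eq_measure)
qed

lemma lower: "\<exists>c. stake_seq c \<and> 1/2 < measure M {\<omega>\<in>space M. S_gamma c \<omega> \<ge> p}"
proof -
  define n where "n = nat \<lfloor>1/p\<rfloor>"
  have ge1: "1 \<le> 1/p" using p0 p1 by (simp add: field_simps)
  have n1: "1 \<le> n" unfolding n_def using ge1 by linarith
  have nle: "real n \<le> 1/p" unfolding n_def using ge1 by linarith
  have hi: "1/p < real n + 1" unfolding n_def using ge1 by linarith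
  have np: "0 < real n" using n1 by simp
  define c where "c i = (if i < n then 1 / real n else 0)" for i
  have csum: "(\<lambda>i. c i * f i) sums (\<Sum>i<n. c i * f i)" for f :: "nat \<Rightarrow> real"
    by (rule sums_finite) (auto simp: c_def)
  have "c sums (\<Sum>i<n. c i)" using csum[of "\<lambda>_. 1"] by simp
  moreover have "(\<Sum>i<n. c i) = 1" using np by (simp add: c_def)
  ultimately have "c sums 1" by simp
  then have st: "stake_seq c" unfolding stake_seq_def by (auto simp: c_def)
  have S_eq: "S_gamma c \<omega> = (\<Sum>i<n. c i * (if \<omega> i then 1 else 0))" for \<omega>
    unfolding S_gamma_def by (rule sums_unique[symmetric]) (rule csum)
  have sub: "space M - {\<omega>\<in>space M. \<forall>i<n. \<not> \<omega> i} \<subseteq> {\<omega>\<in>space M. S_gamma c \<omega> \<ge> p}"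
  proof safe
    fix \<omega> i assume om: "\<omega> \<in> space M" and i: "i < n" "\<omega> i"
    have "p \<le> 1 / real n" using nle p0 np by (simp add: field_simps)
    also have "\<dots> = c i * (if \<omega> i then 1 else 0)" using i by (simp add: c_def)
    also have "\<dots> \<le> (\<Sum>i<n. c i * (if \<omega> i then 1 else 0))"
      by (rule member_le_sum) (use i in \<open>auto simp: c_def\<close>)
    finally show "p \<le> S_gamma c \<omega>" by (simp add: S_eq)
  qed
  have Emeas: "{\<omega>\<in>space M. \<forall>i<n. \<not> \<omega> i} \<in> sets M" by (simp add: M_def)
  have Smeas: "{\<omega>\<in>space M. S_gamma c \<omega> \<ge> p} \<in> sets M"
    unfolding S_gamma_def M_def by measurable
  have "1/2 < 1 - (1-p)^n" using pow_half[OF n1 hi] by simp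
  also have "\<dots> = measure M (space M - {\<omega>\<in>space M. \<forall>i<n. \<not> \<omega> i})"
    using P.prob_compl[OF Emeas] all_false by simp
  also have "\<dots> \<le> measure M {\<omega>\<in>space M. S_gamma c \<omega> \<ge> p}"
    using sub Smeas by (rule P.finite_measure_mono)
  finally show ?thesis using st by blast
qed

end

theorem proposition5:
  fixes p :: real
  assumes "0 < p" and "p < 1"
  shows "1/2 < pi_fun p p \<and> pi_fun p p < 1"
proof -
  interpret bs p using assms by unfold_locales
  define T where "T = {measure (bern_seq p) {\<omega> \<in> space (bern_seq p). S_gamma c \<omega> \<ge> p} | c. stake_seq c}"
  have pf: "pi_fun p p = Sup T" unfolding pi_fun_def T_def ..
  have bdd: "bdd_above T" unfolding T_def by (intro bdd_aboveI[where M=1]) (auto intro: P.prob_le_1)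
  obtain c where c: "stake_seq c" "1/2 < measure M {\<omega>\<in>space M. S_gamma c \<omega> \<ge> p}"
    using lower by blast
  have inT: "measure M {\<omega>\<in>space M. S_gamma c \<omega> \<ge> p} \<in> T" unfolding T_def using c(1) by blast
  have "1/2 < Sup T" using c(2) cSup_upper[OF inT bdd] by linarith
  moreover have "Sup T \<le> 1 - delta"
  proof (rule cSup_least)
    show "T \<noteq> {}" using inT by blast
    fix x assume "x \<in> T"
    then show "x \<le> 1 - delta" unfolding T_def using upper by blast
  qed
  ultimately show ?thesis using delta_pos pf by linarith
qed

end
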